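(* Let $K$ be a field, $A=K[X_1,\ldots,X_m]$ with $m\ge2$, and let $N,k\in\mathbb{N}$ and $q=p^e$ for a prime $p$ and $e\ge0$. Let $J=(X_1^N+X_2^N+\cdots+X_m^N,\ (X_2^q,X_3^q,\ldots,X_m^q)^k)$. If $>$ denotes the graded reverse lexicographic order with $X_1>X_2>\cdots>X_m$, then $$\mathrm{in}_>(J)=(X_1^N,\ (X_2^q,X_3^q,\ldots,X_m^q)^k).$$
   Context: $\mathrm{in}_>(J)$ denotes the initial ideal of $J$, generated by leading monomials of elements of $J$ with respect to $>$. *)

theory Defs
  imports "HOL-Library.Poly_Mapping" "HOL-Computational_Algebra.Primes"
begin

text \<open>Multivariate polynomials over K: finitely supported maps from monomials
(exponent vectors nat to nat finitely supported, variable X_i has index i) to coefficients.\<close>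

type_synonym 'a mpoly = "(nat \<Rightarrow>\<^sub>0 nat) \<Rightarrow>\<^sub>0 'a"

definition polyring :: "nat \<Rightarrow> ('a::field) mpoly set" where
  "polyring m = {p. \<forall>t\<in>Poly_Mapping.keys p. Poly_Mapping.keys t \<subseteq> {1..m}}"

definition Var :: "nat \<Rightarrow> ('a::field) mpoly" where
  "Var i = Poly_Mapping.single (Poly_Mapping.single i 1) 1"

definition monom :: "(nat \<Rightarrow>\<^sub>0 nat) \<Rightarrow> ('a::field) mpoly" where
  "monom t = Poly_Mapping.single t 1"

definition is_ideal :: "nat \<Rightarrow> ('a::field) mpoly set \<Rightarrow> bool" where
  "is_ideal m I \<longleftrightarrow> I \<subseteq> polyring m \<and> 0 \<in> I \<and>
     (\<forall>a\<in>I. \<forall>b\<in>I. a + b \<in> I) \<and> (\<forall>c\<in>polyring m. \<forall>a\<in>I. c * a \<in> I)"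

definition gen_ideal :: "nat \<Rightarrow> ('a::field) mpoly set \<Rightarrow> 'a mpoly set" where
  "gen_ideal m S = \<Inter>{I. is_ideal m I \<and> S \<subseteq> I}"

definition ideal_mult :: "nat \<Rightarrow> ('a::field) mpoly set \<Rightarrow> 'a mpoly set \<Rightarrow> 'a mpoly set" where
  "ideal_mult m I J = gen_ideal m {a * b | a b. a \<in> I \<and> b \<in> J}"

fun ideal_pow :: "nat \<Rightarrow> ('a::field) mpoly set \<Rightarrow> nat \<Rightarrow> 'a mpoly set" where
  "ideal_pow m I 0 = polyring m"
| "ideal_pow m I (Suc k) = ideal_mult m I (ideal_pow m I k)"

definition tdeg :: "(nat \<Rightarrow>\<^sub>0 nat) \<Rightarrow> nat" where
  "tdeg t = (\<Sum>i\<in>Poly_Mapping.keys t. Poly_Mapping.lookup t i)"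

definition grevlex_gt :: "(nat \<Rightarrow>\<^sub>0 nat) \<Rightarrow> (nat \<Rightarrow>\<^sub>0 nat) \<Rightarrow> bool" where
  "grevlex_gt s t \<longleftrightarrow> tdeg s > tdeg t \<or>
     (tdeg s = tdeg t \<and> s \<noteq> t \<and>
      (let i = Max {j. Poly_Mapping.lookup s j \<noteq> Poly_Mapping.lookup t j} in Poly_Mapping.lookup s i < Poly_Mapping.lookup t i))"

definition lead_mon :: "('a::field) mpoly \<Rightarrow> (nat \<Rightarrow>\<^sub>0 nat)" where
  "lead_mon p = (THE t. t \<in> Poly_Mapping.keys p \<and> (\<forall>s\<in>Poly_Mapping.keys p. s \<noteq> t \<longrightarrow> grevlex_gt t s))"

definition init_ideal :: "nat \<Rightarrow> ('a::field) mpoly set \<Rightarrow> 'a mpoly set" where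
  "init_ideal m J = gen_ideal m {monom (lead_mon f) | f. f \<in> J \<and> f \<noteq> 0}"

end

theory Submission
  imports Defs
begin

definition pmons :: "nat \<Rightarrow> (nat \<Rightarrow>\<^sub>0 nat) set" where
  "pmons m = {t. Poly_Mapping.keys t \<subseteq> {1..m}}"

lemma polyring_iff: "p \<in> polyring m \<longleftrightarrow> Poly_Mapping.keys p \<subseteq> pmons m"
  by (auto simp: polyring_def pmons_def)

lemma keys_add_nat: "Poly_Mapping.keys (s + t :: nat \<Rightarrow>\<^sub>0 nat) = Poly_Mapping.keys s \<union> Poly_Mapping.keys t"
  by (auto simp: in_keys_iff lookup_add)

lemma pmons_add: "s \<in> pmons m \<Longrightarrow> t \<in> pmons m \<Longrightarrow> s + t \<in> pmons m"
  by (auto simp: pmons_def keys_add_nat)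

lemma polyring_0: "0 \<in> polyring m"
  by (simp add: polyring_iff)

lemma polyring_add: "a \<in> polyring m \<Longrightarrow> b \<in> polyring m \<Longrightarrow> a + b \<in> polyring m"
  unfolding polyring_iff using keys_add[of a b] by blast

lemma polyring_mult: "a \<in> polyring m \<Longrightarrow> b \<in> polyring m \<Longrightarrow> (a * b :: 'a::field mpoly) \<in> polyring m"
proof -
  assume a: "a \<in> polyring m" and b: "b \<in> polyring m"
  show ?thesis unfolding polyring_iff
  proof
    fix x assume "x \<in> Poly_Mapping.keys (a * b)"
    then obtain s t where "x = s + t" "s \<in> Poly_Mapping.keys a" "t \<in> Poly_Mapping.keys b"
      using keys_mult[of a b] by blast
    then show "x \<in> pmons m" using a b pmons_add unfolding polyring_iff by blast
  qed
qed

lemma polyring_single: "t \<in> pmons m \<Longrightarrow> (Poly_Mapping.single t c :: 'a::field mpoly) \<in> polyring m"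
  unfolding polyring_iff by simp

lemma pmons_0: "0 \<in> pmons m" by (simp add: pmons_def)

lemma is_ideal_polyring: "is_ideal m (polyring m :: 'a::field mpoly set)"
  unfolding is_ideal_def using polyring_0 polyring_add polyring_mult by blast

lemma is_idealI:
  "I \<subseteq> polyring m \<Longrightarrow> 0 \<in> I \<Longrightarrow> (\<And>a b. a \<in> I \<Longrightarrow> b \<in> I \<Longrightarrow> a + b \<in> I)
   \<Longrightarrow> (\<And>c a. c \<in> polyring m \<Longrightarrow> a \<in> I \<Longrightarrow> c * a \<in> I) \<Longrightarrow> is_ideal m I"
  by (simp add: is_ideal_def)

lemma gen_ideal_ideal:
  assumes "S \<subseteq> polyring m" shows "is_ideal m (gen_ideal m S)"
proof -
  let ?F = "{I. is_ideal m I \<and> S \<subseteq> I}"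
  have ne: "polyring m \<in> ?F" using assms is_ideal_polyring by blast
  have 1: "\<Inter> ?F \<subseteq> polyring m" using ne by blast
  have 2: "0 \<in> \<Inter> ?F" by (rule InterI) (simp add: is_ideal_def)
  have 3: "a + b \<in> \<Inter> ?F" if "a \<in> \<Inter> ?F" "b \<in> \<Inter> ?F" for a b
  proof (rule InterI)
    fix I assume "I \<in> ?F"
    then show "a + b \<in> I" using that by (auto simp: is_ideal_def)
  qed
  have 4: "c * a \<in> \<Inter> ?F" if "c \<in> polyring m" "a \<in> \<Inter> ?F" for a c
  proof (rule InterI)
    fix I assume "I \<in> ?F"
    then show "c * a \<in> I" using that by (auto simp: is_ideal_def)
  qed
  show ?thesis unfolding gen_ideal_def
    by (rule is_idealI[OF 1 2 3 4])
qed

lemma gen_ideal_sup: "S \<subseteq> gen_ideal m S"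
  unfolding gen_ideal_def by blast

lemma gen_ideal_least: "is_ideal m I \<Longrightarrow> S \<subseteq> I \<Longrightarrow> gen_ideal m S \<subseteq> I"
  unfolding gen_ideal_def by blast

lemma ideal_sum:
  assumes "is_ideal m I" "\<And>x. x \<in> A \<Longrightarrow> F x \<in> I"
  shows "sum F A \<in> I"
  using assms(2)
proof (induction A rule: infinite_finite_induct)
  case (infinite A) then show ?case using assms(1) by (simp add: is_ideal_def)
next
  case empty then show ?case using assms(1) by (simp add: is_ideal_def)
next
  case (insert x F) then show ?case using assms(1) by (simp add: is_ideal_def)
qed

lemma ideal_mult_closed: "is_ideal m I \<Longrightarrow> c \<in> polyring m \<Longrightarrow> a \<in> I \<Longrightarrow> c * a \<in> I"
  by (simp add: is_ideal_def)

lemma ideal_sub: "is_ideal m I \<Longrightarrow> a \<in> I \<Longrightarrow> a \<in> polyring m"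
  by (auto simp: is_ideal_def)

lemma poly_repr: "p = (\<Sum>t\<in>Poly_Mapping.keys p. Poly_Mapping.single t (Poly_Mapping.lookup p t))"
proof (rule poly_mapping_eqI)
  fix x
  show "Poly_Mapping.lookup p x = Poly_Mapping.lookup (\<Sum>t\<in>Poly_Mapping.keys p. Poly_Mapping.single t (Poly_Mapping.lookup p t)) x"
    by (cases "x \<in> Poly_Mapping.keys p")
       (simp_all add: lookup_sum lookup_single when_def in_keys_iff)
qed

lemma single_monom: "Poly_Mapping.single t c = Poly_Mapping.single 0 c * (monom t :: 'a::field mpoly)"
  by (simp add: monom_def mult_single)

lemma ideal_from_monoms:
  assumes I: "is_ideal m I" and p: "p \<in> polyring m"
    and mon: "\<And>t. t \<in> Poly_Mapping.keys p \<Longrightarrow> (monom t :: 'a::field mpoly) \<in> I"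
  shows "p \<in> I"
proof -
  have "(\<Sum>t\<in>Poly_Mapping.keys p. Poly_Mapping.single t (Poly_Mapping.lookup p t)) \<in> I"
  proof (rule ideal_sum[OF I])
    fix t assume "t \<in> Poly_Mapping.keys p"
    then show "Poly_Mapping.single t (Poly_Mapping.lookup p t) \<in> I"
      using ideal_mult_closed[OF I polyring_single[OF pmons_0] mon] by (simp add: single_monom[of t])
  qed
  then show ?thesis using poly_repr[of p] by simp
qed

lemma Var_pow: "(Var i :: 'a::field mpoly) ^ n = monom (Poly_Mapping.single i n)"
  by (induction n) (simp_all add: Var_def monom_def mult_single single_add[symmetric] add.commute)

lemma keys_monom [simp]: "Poly_Mapping.keys (monom t :: 'a::field mpoly) = {t}"
  by (simp add: monom_def)

lemma lookup_mult_single: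
  fixes e x :: "nat \<Rightarrow>\<^sub>0 nat"
  shows "Poly_Mapping.lookup (p * Poly_Mapping.single e c) (x + e) = Poly_Mapping.lookup p x * (c :: 'a::field)"
proof -
  have inner: "(\<Sum>aa. (c when e = aa) when x + e = l + aa) = (c when x = l)" for l
  proof -
    have "(\<Sum>aa. (c when e = aa) when x + e = l + aa) = (\<Sum>aa. (c when x + e = l + aa) when e = aa)"
      by (simp add: when_when conj_commute)
    also have "\<dots> = (c when x + e = l + e)" by (rule Sum_any_when_equal')
    also have "\<dots> = (c when x = l)" using add_right_cancel[of x e l] by (simp only:)
    finally show ?thesis .
  qed
  have "Poly_Mapping.lookup (p * Poly_Mapping.single e c) (x + e)
     = (\<Sum>l. Poly_Mapping.lookup p l * (c when x = l))"
    by (simp add: lookup_mult lookup_single inner)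
  also have "\<dots> = (\<Sum>l. Poly_Mapping.lookup p l * c when x = l)"
    by (simp add: mult_when)
  also have "\<dots> = Poly_Mapping.lookup p x * c" by simp
  finally show ?thesis .
qed

lemma keys_mult_single:
  fixes e :: "nat \<Rightarrow>\<^sub>0 nat"
  shows "Poly_Mapping.keys (p * Poly_Mapping.single e (c::'a::field)) \<subseteq> {x + e | x. x \<in> Poly_Mapping.keys p}"
  using keys_mult[of p "Poly_Mapping.single e c"] by (auto split: if_splits)


definition MI :: "nat \<Rightarrow> (nat \<Rightarrow>\<^sub>0 nat) set \<Rightarrow> ('a::field) mpoly set" where
  "MI m M = {p \<in> polyring m. Poly_Mapping.keys p \<subseteq> M}"

definition Mk :: "nat \<Rightarrow> nat \<Rightarrow> nat \<Rightarrow> (nat \<Rightarrow>\<^sub>0 nat) set" where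
  "Mk m q k = {t \<in> pmons m. k \<le> (\<Sum>i\<in>{2..m}. Poly_Mapping.lookup t i div q)}"

definition upclosed :: "nat \<Rightarrow> (nat \<Rightarrow>\<^sub>0 nat) set \<Rightarrow> bool" where
  "upclosed m M \<longleftrightarrow> (\<forall>t\<in>M. \<forall>s\<in>pmons m. s + t \<in> M)"

lemma MI_ideal:
  assumes up: "upclosed m M" shows "is_ideal m (MI m M :: 'a::field mpoly set)"
proof (rule is_idealI)
  show "MI m M \<subseteq> polyring m" by (auto simp: MI_def)
  show "0 \<in> MI m M" by (simp add: MI_def polyring_0)
  fix a b :: "'a mpoly" assume a: "a \<in> MI m M" and b: "b \<in> MI m M"
  have "Poly_Mapping.keys (a + b) \<subseteq> M" using a b keys_add[of a b] unfolding MI_def by blast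
  moreover have "a + b \<in> polyring m" using a b polyring_add unfolding MI_def by blast
  ultimately show "a + b \<in> MI m M" unfolding MI_def by blast
next
  fix c a :: "'a mpoly" assume c: "c \<in> polyring m" and a: "a \<in> MI m M"
  have "Poly_Mapping.keys (c * a) \<subseteq> M"
  proof
    fix x assume "x \<in> Poly_Mapping.keys (c * a)"
    then obtain s t where "x = s + t" "s \<in> Poly_Mapping.keys c" "t \<in> Poly_Mapping.keys a"
      using keys_mult[of c a] by blast
    have "s \<in> pmons m" using c \<open>s \<in> _\<close> unfolding polyring_iff by blast
    moreover have "t \<in> M" using a \<open>t \<in> _\<close> unfolding MI_def by blast
    ultimately show "x \<in> M" using up \<open>x = s + t\<close> unfolding upclosed_def by blast
  qed
  moreover have "c * a \<in> polyring m" using c a polyring_mult unfolding MI_def by blast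
  ultimately show "c * a \<in> MI m M" unfolding MI_def by blast
qed

lemma MI_mult:
  assumes a: "a \<in> MI m A" and b: "b \<in> MI m B" and C: "\<And>x y. x \<in> A \<Longrightarrow> y \<in> B \<Longrightarrow> x + y \<in> C"
  shows "(a * b :: 'a::field mpoly) \<in> MI m C"
proof -
  have "Poly_Mapping.keys (a * b) \<subseteq> C"
  proof
    fix x assume "x \<in> Poly_Mapping.keys (a * b)"
    then obtain s t where "x = s + t" "s \<in> Poly_Mapping.keys a" "t \<in> Poly_Mapping.keys b"
      using keys_mult[of a b] by blast
    have "s \<in> A" using a \<open>s \<in> _\<close> unfolding MI_def by blast
    moreover have "t \<in> B" using b \<open>t \<in> _\<close> unfolding MI_def by blast
    ultimately show "x \<in> C" using C \<open>x = s + t\<close> by blast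
  qed
  moreover have "a * b \<in> polyring m" using a b polyring_mult unfolding MI_def by blast
  ultimately show ?thesis unfolding MI_def by blast
qed

lemma div_add_ge: "(a::nat) div q + b div q \<le> (a + b) div q"
  using div_add1_eq[of a b q] by linarith

lemma Mk_upclosed: "upclosed m (Mk m q k)"
  unfolding upclosed_def
proof (intro ballI)
  fix t s assume t: "t \<in> Mk m q k" and s: "s \<in> pmons m"
  have "(\<Sum>i\<in>{2..m}. Poly_Mapping.lookup t i div q) \<le> (\<Sum>i\<in>{2..m}. Poly_Mapping.lookup (s + t) i div q)"
    by (rule sum_mono) (simp add: lookup_add div_le_mono)
  then show "s + t \<in> Mk m q k" using t s pmons_add by (auto simp: Mk_def)
qed

lemma Mk_add: "x \<in> Mk m q a \<Longrightarrow> y \<in> Mk m q b \<Longrightarrow> x + y \<in> Mk m q (a + b)"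
proof -
  assume x: "x \<in> Mk m q a" and y: "y \<in> Mk m q b"
  have "(\<Sum>i\<in>{2..m}. Poly_Mapping.lookup x i div q) + (\<Sum>i\<in>{2..m}. Poly_Mapping.lookup y i div q)
       \<le> (\<Sum>i\<in>{2..m}. Poly_Mapping.lookup (x + y) i div q)"
    unfolding sum.distrib[symmetric] by (rule sum_mono) (simp add: lookup_add div_add_ge)
  then show ?thesis using x y pmons_add by (auto simp: Mk_def)
qed

lemma Mk0: "MI m (Mk m q 0) = polyring m"
  by (auto simp: MI_def Mk_def polyring_iff)

lemma single_pmons: "(i::nat) \<in> {1..m} \<Longrightarrow> Poly_Mapping.single i n \<in> pmons m"
  by (simp add: pmons_def)

lemma sum_single_div:
  fixes i m q :: nat
  assumes "i \<in> {2..m}" "0 < q"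
  shows "(\<Sum>j\<in>{2..m}. Poly_Mapping.lookup (Poly_Mapping.single i q) j div q) = 1"
proof -
  have "(\<Sum>j\<in>{2..m}. Poly_Mapping.lookup (Poly_Mapping.single i q) j div q) = (\<Sum>j\<in>{2..m}. if j = i then 1 else 0)"
    by (rule sum.cong) (use assms in \<open>auto simp: lookup_single when_def\<close>)
  also have "\<dots> = 1" using assms(1) by simp
  finally show ?thesis .
qed

lemma decompose_mon:
  assumes t: "t \<in> Mk m q (Suc k)" and q: "0 < q"
  shows "\<exists>i\<in>{2..m}. \<exists>t'. t = Poly_Mapping.single i q + t' \<and> t' \<in> Mk m q k"
proof -
  obtain i where i: "i \<in> {2..m}" "q \<le> Poly_Mapping.lookup t i"
  proof (rule ccontr)
    assume "\<not> thesis"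
    then have "\<forall>i\<in>{2..m}. Poly_Mapping.lookup t i < q" using that by force
    then have "(\<Sum>i\<in>{2..m}. Poly_Mapping.lookup t i div q) = 0" by simp
    then show False using t by (simp add: Mk_def)
  qed
  define t' where "t' = t - Poly_Mapping.single i q"
  have lk: "Poly_Mapping.lookup t j = Poly_Mapping.lookup t' j + (if j = i then q else 0)" for j
    using i by (auto simp: t'_def lookup_minus lookup_single when_def)
  have teq: "t = Poly_Mapping.single i q + t'"
    by (rule poly_mapping_eqI) (simp add: lookup_add lk lookup_single when_def)
  have "Poly_Mapping.keys t' \<subseteq> Poly_Mapping.keys t"
    using lk by (auto simp: in_keys_iff)
  then have t'p: "t' \<in> pmons m" using t by (auto simp: Mk_def pmons_def)
  have ld: "Poly_Mapping.lookup t j div q = Poly_Mapping.lookup t' j div q + (if j = i then 1 else 0)" for j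
    using q by (simp add: lk div_add_self2)
  have "(\<Sum>j\<in>{2..m}. Poly_Mapping.lookup t j div q) = (\<Sum>j\<in>{2..m}. Poly_Mapping.lookup t' j div q) + (\<Sum>j\<in>{2..m}. if j = i then 1 else 0)"
    unfolding ld sum.distrib ..
  also have "(\<Sum>j\<in>{2..m}. if j = i then 1 else (0::nat)) = 1" using i(1) by simp
  finally have "k \<le> (\<Sum>j\<in>{2..m}. Poly_Mapping.lookup t' j div q)" using t by (simp add: Mk_def)
  then show ?thesis using i(1) teq t'p by (auto simp: Mk_def)
qed

lemma Q_eq:
  assumes q: "0 < q"
  shows "ideal_pow m (gen_ideal m {(Var i :: 'a::field mpoly) ^ q | i. i \<in> {2..m}}) k = MI m (Mk m q k)"
proof (induction k)
  case 0 then show ?case by (simp add: Mk0)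
next
  case (Suc k)
  let ?S = "{(Var i :: 'a::field mpoly) ^ q | i. i \<in> {2..m}}"
  let ?G = "gen_ideal m ?S"
  have Sp: "?S \<subseteq> polyring m"
    by (auto simp: Var_pow monom_def intro!: polyring_single single_pmons)
  have S1: "?S \<subseteq> MI m (Mk m q 1)"
  proof
    fix x assume "x \<in> ?S"
    then obtain i where i: "i \<in> {2..m}" "x = Var i ^ q" by blast
    have "Poly_Mapping.single i q \<in> Mk m q 1"
      using i q sum_single_div[OF i(1) q] single_pmons[of i m q] by (simp add: Mk_def)
    then show "x \<in> MI m (Mk m q 1)" using i Sp by (auto simp: MI_def Var_pow)
  qed
  have G1: "?G \<subseteq> MI m (Mk m q 1)"
    by (rule gen_ideal_least[OF MI_ideal[OF Mk_upclosed] S1])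
  have Gp: "?G \<subseteq> polyring m" using ideal_sub[OF gen_ideal_ideal[OF Sp]] by blast
  let ?P = "{a * b | a b. a \<in> ?G \<and> b \<in> MI m (Mk m q k)}"
  have eq: "ideal_pow m ?G (Suc k) = gen_ideal m ?P" using Suc by (simp add: ideal_mult_def)
  have Pp: "?P \<subseteq> polyring m" using Gp polyring_mult by (auto simp: MI_def)
  show ?case unfolding eq
  proof
    show "gen_ideal m ?P \<subseteq> MI m (Mk m q (Suc k))"
    proof (rule gen_ideal_least[OF MI_ideal[OF Mk_upclosed]])
      show "?P \<subseteq> MI m (Mk m q (Suc k))"
      proof
        fix x assume "x \<in> ?P"
        then obtain a b where ab: "x = a * b" "a \<in> ?G" "b \<in> MI m (Mk m q k)" by blast
        show "x \<in> MI m (Mk m q (Suc k))" unfolding ab(1)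
          by (rule MI_mult[OF subsetD[OF G1 ab(2)] ab(3)]) (metis Mk_add plus_1_eq_Suc)
      qed
    qed
  next
    show "MI m (Mk m q (Suc k)) \<subseteq> gen_ideal m ?P"
    proof
      fix p :: "'a mpoly" assume p: "p \<in> MI m (Mk m q (Suc k))"
      show "p \<in> gen_ideal m ?P"
      proof (rule ideal_from_monoms[OF gen_ideal_ideal[OF Pp]])
        show "p \<in> polyring m" using p by (simp add: MI_def)
        fix t assume "t \<in> Poly_Mapping.keys p"
        then have "t \<in> Mk m q (Suc k)" using p by (auto simp: MI_def)
        then obtain i t' where i: "i \<in> {2..m}" and teq: "t = Poly_Mapping.single i q + t'"
          and t': "t' \<in> Mk m q k" using decompose_mon[OF _ q] by blast
        have "Var i ^ q \<in> ?G" using i by (intro subsetD[OF gen_ideal_sup]) blast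
        moreover have "monom t' \<in> MI m (Mk m q k)"
          using t' by (auto simp: MI_def Mk_def intro!: polyring_single simp: monom_def)
        moreover have "(monom t :: 'a mpoly) = Var i ^ q * monom t'"
          by (simp add: Var_pow monom_def mult_single teq)
        ultimately have "monom t \<in> ?P" by blast
        then show "monom t \<in> gen_ideal m ?P" by (rule subsetD[OF gen_ideal_sup])
      qed
    qed
  qed
qed


lemma tdeg_sum:
  assumes "finite S" "Poly_Mapping.keys t \<subseteq> S"
  shows "tdeg t = sum (Poly_Mapping.lookup t) S"
  unfolding tdeg_def
  by (rule sum.mono_neutral_left) (use assms in \<open>auto simp: in_keys_iff\<close>)

lemma tdeg_add: "tdeg (s + t) = tdeg s + tdeg t"
proof -
  let ?S = "Poly_Mapping.keys s \<union> Poly_Mapping.keys t"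
  have "tdeg (s + t) = sum (Poly_Mapping.lookup (s + t)) ?S"
    by (rule tdeg_sum) (auto simp: keys_add_nat)
  also have "\<dots> = sum (Poly_Mapping.lookup s) ?S + sum (Poly_Mapping.lookup t) ?S"
    by (simp add: lookup_add sum.distrib)
  also have "\<dots> = tdeg s + tdeg t"
    by (simp add: tdeg_sum[of ?S s] tdeg_sum[of ?S t])
  finally show ?thesis .
qed

lemma tdeg_single: "tdeg (Poly_Mapping.single i n) = n"
  by (cases "n = 0") (simp_all add: tdeg_def)

lemma gt_iff:
  "grevlex_gt s t \<longleftrightarrow> tdeg t < tdeg s \<or> (tdeg s = tdeg t \<and>
     (\<exists>i. Poly_Mapping.lookup s i < Poly_Mapping.lookup t i \<and> (\<forall>j>i. Poly_Mapping.lookup s j = Poly_Mapping.lookup t j)))"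
proof -
  define D where "D = {j. Poly_Mapping.lookup s j \<noteq> Poly_Mapping.lookup t j}"
  have finD: "finite D"
    by (rule finite_subset[of _ "Poly_Mapping.keys s \<union> Poly_Mapping.keys t"]) (auto simp: D_def in_keys_iff)
  have 1: "(s \<noteq> t \<and> Poly_Mapping.lookup s (Max D) < Poly_Mapping.lookup t (Max D)) \<longleftrightarrow>
     (\<exists>i. Poly_Mapping.lookup s i < Poly_Mapping.lookup t i \<and> (\<forall>j>i. Poly_Mapping.lookup s j = Poly_Mapping.lookup t j))"
  proof
    assume a: "s \<noteq> t \<and> Poly_Mapping.lookup s (Max D) < Poly_Mapping.lookup t (Max D)"
    have "\<forall>j>Max D. Poly_Mapping.lookup s j = Poly_Mapping.lookup t j"
    proof (intro allI impI)
      fix j assume j: "Max D < j"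
      show "Poly_Mapping.lookup s j = Poly_Mapping.lookup t j"
      proof (rule ccontr)
        assume "Poly_Mapping.lookup s j \<noteq> Poly_Mapping.lookup t j"
        then have "j \<in> D" by (simp add: D_def)
        then have "j \<le> Max D" using finD by simp
        then show False using j by simp
      qed
    qed
    then show "\<exists>i. Poly_Mapping.lookup s i < Poly_Mapping.lookup t i \<and> (\<forall>j>i. Poly_Mapping.lookup s j = Poly_Mapping.lookup t j)"
      using a by blast
  next
    assume "\<exists>i. Poly_Mapping.lookup s i < Poly_Mapping.lookup t i \<and> (\<forall>j>i. Poly_Mapping.lookup s j = Poly_Mapping.lookup t j)"
    then obtain i where i: "Poly_Mapping.lookup s i < Poly_Mapping.lookup t i"
      "\<forall>j>i. Poly_Mapping.lookup s j = Poly_Mapping.lookup t j" by blast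
    have iD: "i \<in> D" using i by (simp add: D_def)
    have "Max D = i"
    proof (rule Max_eqI[OF finD _ iD])
      fix j assume "j \<in> D"
      then show "j \<le> i" using i(2) by (simp add: D_def) (meson not_le)
    qed
    then show "s \<noteq> t \<and> Poly_Mapping.lookup s (Max D) < Poly_Mapping.lookup t (Max D)"
      using i by auto
  qed
  show ?thesis
    unfolding grevlex_gt_def Let_def D_def[symmetric] using 1 by blast
qed

lemma gt_asym: "grevlex_gt s t \<Longrightarrow> \<not> grevlex_gt t s"
proof
  assume a: "grevlex_gt s t" and b: "grevlex_gt t s"
  then have eq: "tdeg s = tdeg t" by (auto simp: gt_iff)
  obtain i where i: "Poly_Mapping.lookup s i < Poly_Mapping.lookup t i"
      "\<forall>j>i. Poly_Mapping.lookup s j = Poly_Mapping.lookup t j" using a eq by (auto simp: gt_iff)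
  obtain i' where i': "Poly_Mapping.lookup t i' < Poly_Mapping.lookup s i'"
      "\<forall>j>i'. Poly_Mapping.lookup t j = Poly_Mapping.lookup s j" using b eq by (auto simp: gt_iff)
  show False
  proof (cases i i' rule: linorder_cases)
    case less then show ?thesis using i(2) i'(1) by force
  next
    case equal then show ?thesis using i(1) i'(1) by simp
  next
    case greater then show ?thesis using i(1) i'(2) by force
  qed
qed

lemma gt_irrefl: "\<not> grevlex_gt s s"
  using gt_asym by blast

lemma gt_trans: "grevlex_gt s t \<Longrightarrow> grevlex_gt t u \<Longrightarrow> grevlex_gt s u"
proof -
  assume a: "grevlex_gt s t" and b: "grevlex_gt t u"
  have d1: "tdeg t \<le> tdeg s" and d2: "tdeg u \<le> tdeg t" using a b by (auto simp: gt_iff)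
  show ?thesis
  proof (cases "tdeg s = tdeg t \<and> tdeg t = tdeg u")
    case False
    then have "tdeg u < tdeg s" using d1 d2 by auto
    then show ?thesis by (simp add: gt_iff)
  next
    case True
    obtain i where i: "Poly_Mapping.lookup s i < Poly_Mapping.lookup t i"
        "\<forall>j>i. Poly_Mapping.lookup s j = Poly_Mapping.lookup t j" using a True by (auto simp: gt_iff)
    obtain i' where i': "Poly_Mapping.lookup t i' < Poly_Mapping.lookup u i'"
        "\<forall>j>i'. Poly_Mapping.lookup t j = Poly_Mapping.lookup u j" using b True by (auto simp: gt_iff)
    have "\<exists>k. Poly_Mapping.lookup s k < Poly_Mapping.lookup u k \<and> (\<forall>j>k. Poly_Mapping.lookup s j = Poly_Mapping.lookup u j)"
    proof (cases i i' rule: linorder_cases)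
      case less
      then have "Poly_Mapping.lookup s i' < Poly_Mapping.lookup u i' \<and> (\<forall>j>i'. Poly_Mapping.lookup s j = Poly_Mapping.lookup u j)"
        using i i' by force
      then show ?thesis by blast
    next
      case equal
      then have "Poly_Mapping.lookup s i < Poly_Mapping.lookup u i \<and> (\<forall>j>i. Poly_Mapping.lookup s j = Poly_Mapping.lookup u j)"
        using i i' by force
      then show ?thesis by blast
    next
      case greater
      then have "Poly_Mapping.lookup s i < Poly_Mapping.lookup u i \<and> (\<forall>j>i. Poly_Mapping.lookup s j = Poly_Mapping.lookup u j)"
        using i i' by force
      then show ?thesis by blast
    qed
    then show ?thesis using True by (simp add: gt_iff)
  qed
qed

lemma gt_total: "s \<noteq> t \<Longrightarrow> grevlex_gt s t \<or> grevlex_gt t s"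
proof -
  assume st: "s \<noteq> t"
  show ?thesis
  proof (cases "tdeg s = tdeg t")
    case False then show ?thesis by (auto simp: gt_iff)
  next
    case True
    define D where "D = {j. Poly_Mapping.lookup s j \<noteq> Poly_Mapping.lookup t j}"
    have finD: "finite D"
      by (rule finite_subset[of _ "Poly_Mapping.keys s \<union> Poly_Mapping.keys t"]) (auto simp: D_def in_keys_iff)
    obtain j where "Poly_Mapping.lookup s j \<noteq> Poly_Mapping.lookup t j" using st by (metis poly_mapping_eqI)
    then have "j \<in> D" by (simp add: D_def)
    then have "D \<noteq> {}" by blast
    then have MD: "Max D \<in> D" using finD by simp
    have above: "\<forall>j>Max D. Poly_Mapping.lookup s j = Poly_Mapping.lookup t j"
    proof (intro allI impI)
      fix j assume j: "Max D < j"
      show "Poly_Mapping.lookup s j = Poly_Mapping.lookup t j"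
      proof (rule ccontr)
        assume "Poly_Mapping.lookup s j \<noteq> Poly_Mapping.lookup t j"
        then have "j \<in> D" by (simp add: D_def)
        then have "j \<le> Max D" using finD by simp
        then show False using j by simp
      qed
    qed
    have "Poly_Mapping.lookup s (Max D) < Poly_Mapping.lookup t (Max D) \<or> Poly_Mapping.lookup t (Max D) < Poly_Mapping.lookup s (Max D)"
      using MD by (auto simp: D_def)
    then show ?thesis using True above by (metis gt_iff)
  qed
qed

lemma gt_add: "grevlex_gt s t \<Longrightarrow> grevlex_gt (s + c) (t + c)"
  by (simp add: gt_iff tdeg_add lookup_add)

definition gge :: "(nat \<Rightarrow>\<^sub>0 nat) \<Rightarrow> (nat \<Rightarrow>\<^sub>0 nat) \<Rightarrow> bool" where
  "gge s t \<longleftrightarrow> s = t \<or> grevlex_gt s t"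

lemma gge_add: "gge s t \<Longrightarrow> gge (s + c) (t + c)"
  by (auto simp: gge_def gt_add)

lemma gge_trans: "gge s t \<Longrightarrow> gge t u \<Longrightarrow> gge s u"
  by (auto simp: gge_def intro: gt_trans)

lemma gt_gge_trans: "grevlex_gt s t \<Longrightarrow> gge t u \<Longrightarrow> grevlex_gt s u"
  by (auto simp: gge_def intro: gt_trans)

lemma gge_gt_trans: "gge s t \<Longrightarrow> grevlex_gt t u \<Longrightarrow> grevlex_gt s u"
  by (auto simp: gge_def intro: gt_trans)

lemma gge_add2: "gge s t \<Longrightarrow> gge s' t' \<Longrightarrow> gge (s + s') (t + t')"
proof -
  assume a: "gge s t" and b: "gge s' t'"
  have "gge (s + s') (t + s')" using gge_add[OF a] .
  moreover have "gge (t + s') (t + t')" using gge_add[OF b, of t] by (simp add: add.commute)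
  ultimately show ?thesis by (rule gge_trans)
qed

lemma gt_add2: "grevlex_gt s t \<Longrightarrow> gge s' t' \<Longrightarrow> grevlex_gt (s + s') (t + t')"
proof -
  assume a: "grevlex_gt s t" and b: "gge s' t'"
  have "grevlex_gt (s + s') (t + s')" using gt_add[OF a] .
  moreover have "gge (t + s') (t + t')" using gge_add[OF b, of t] by (simp add: add.commute)
  ultimately show ?thesis by (rule gt_gge_trans)
qed

lemma gt_add2': "gge s t \<Longrightarrow> grevlex_gt s' t' \<Longrightarrow> grevlex_gt (s + s') (t + t')"
  using gt_add2[of s' t' s t] by (simp add: add.commute)

lemma finite_max_ex:
  assumes "finite A" "A \<noteq> {}"
  shows "\<exists>t\<in>A. \<forall>s\<in>A. s \<noteq> t \<longrightarrow> grevlex_gt t s"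
  using assms
proof (induction A rule: finite_ne_induct)
  case (singleton x) then show ?case by simp
next
  case (insert x F)
  then obtain t where t: "t \<in> F" "\<forall>s\<in>F. s \<noteq> t \<longrightarrow> grevlex_gt t s" by blast
  show ?case
  proof (cases "grevlex_gt x t")
    case True
    have "grevlex_gt x s" if "s \<in> insert x F" "s \<noteq> x" for s
    proof -
      have sF: "s \<in> F" using that by blast
      show ?thesis
      proof (cases "s = t")
        case True then show ?thesis using \<open>grevlex_gt x t\<close> by simp
      next
        case False
        then have "grevlex_gt t s" using t(2) sF by blast
        then show ?thesis using gt_trans[OF \<open>grevlex_gt x t\<close>] by blast
      qed
    qed
    then have "\<forall>s\<in>insert x F. s \<noteq> x \<longrightarrow> grevlex_gt x s" by blast
    then show ?thesis by blast
  next
    case False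
    then have "x = t \<or> grevlex_gt t x" using gt_total by blast
    then have "\<forall>s\<in>insert x F. s \<noteq> t \<longrightarrow> grevlex_gt t s" using t by auto
    then show ?thesis using t(1) by blast
  qed
qed

lemma lead_mon_eq:
  assumes "t \<in> Poly_Mapping.keys p" "\<forall>s\<in>Poly_Mapping.keys p. s \<noteq> t \<longrightarrow> grevlex_gt t s"
  shows "lead_mon p = t"
  unfolding lead_mon_def
proof (rule the_equality)
  show "t \<in> Poly_Mapping.keys p \<and> (\<forall>s\<in>Poly_Mapping.keys p. s \<noteq> t \<longrightarrow> grevlex_gt t s)" using assms by blast
  fix t' assume t': "t' \<in> Poly_Mapping.keys p \<and> (\<forall>s\<in>Poly_Mapping.keys p. s \<noteq> t' \<longrightarrow> grevlex_gt t' s)"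
  show "t' = t"
  proof (rule ccontr)
    assume ne: "t' \<noteq> t"
    have "grevlex_gt t t'" using assms(2) t' ne by blast
    moreover have "grevlex_gt t' t" using t' assms(1) ne[symmetric] by blast
    ultimately show False using gt_asym by blast
  qed
qed

lemma lead_mon_props:
  assumes "p \<noteq> 0"
  shows "lead_mon p \<in> Poly_Mapping.keys p" "\<forall>s\<in>Poly_Mapping.keys p. s \<noteq> lead_mon p \<longrightarrow> grevlex_gt (lead_mon p) s"
proof -
  obtain t where t: "t \<in> Poly_Mapping.keys p" "\<forall>s\<in>Poly_Mapping.keys p. s \<noteq> t \<longrightarrow> grevlex_gt t s"
    using finite_max_ex[of "Poly_Mapping.keys p"] assms by auto
  then have "lead_mon p = t" by (rule lead_mon_eq)
  then show "lead_mon p \<in> Poly_Mapping.keys p" "\<forall>s\<in>Poly_Mapping.keys p. s \<noteq> lead_mon p \<longrightarrow> grevlex_gt (lead_mon p) s"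
    using t by auto
qed


lemma E_gt:
  assumes "i \<in> {2..m}" "N \<ge> 1"
  shows "grevlex_gt (Poly_Mapping.single 1 N) (Poly_Mapping.single (i::nat) N)"
proof -
  have a: "Poly_Mapping.lookup (Poly_Mapping.single 1 N) i < Poly_Mapping.lookup (Poly_Mapping.single i N) i"
    using assms by (simp add: lookup_single when_def)
  have b: "\<forall>j>i. Poly_Mapping.lookup (Poly_Mapping.single 1 N) j = Poly_Mapping.lookup (Poly_Mapping.single i N) j"
    using assms by (auto simp: lookup_single when_def)
  show ?thesis unfolding gt_iff tdeg_single using a b by blast
qed

lemma E_gge:
  assumes "i \<in> {1..m}" "N \<ge> 1"
  shows "gge (Poly_Mapping.single 1 N) (Poly_Mapping.single (i::nat) N)"
proof (cases "i = 1")
  case True then show ?thesis by (simp add: gge_def)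
next
  case False then have "i \<in> {2..m}" using assms by auto
  then show ?thesis using E_gt[OF _ assms(2)] unfolding gge_def by blast
qed

lemma f_expand:
  "(\<Sum>i\<in>{1..m}. (Var i :: 'a::field mpoly) ^ N) = (\<Sum>i\<in>{1..m}. Poly_Mapping.single (Poly_Mapping.single i N) 1)"
  by (simp add: Var_pow monom_def)

lemma key_lemma:
  fixes hA :: "'a::field mpoly"
  assumes hA: "hA \<noteq> 0" and N: "N \<ge> 1" and m: "m \<ge> 1"
  defines "f \<equiv> (\<Sum>i\<in>{1..m}. (Var i :: 'a mpoly) ^ N)"
  defines "v \<equiv> lead_mon hA + Poly_Mapping.single 1 N"
  shows "\<And>s. s \<in> Poly_Mapping.keys (hA * f) \<Longrightarrow> gge v s"
    and "Poly_Mapping.lookup (hA * f) v = Poly_Mapping.lookup hA (lead_mon hA)"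
proof -
  let ?u = "lead_mon hA"
  let ?E = "\<lambda>i::nat. Poly_Mapping.single i N"
  have prod: "hA * f = (\<Sum>i\<in>{1..m}. hA * Poly_Mapping.single (?E i) 1)"
    unfolding f_def f_expand by (simp add: sum_distrib_left)
  have u: "?u \<in> Poly_Mapping.keys hA" "\<forall>s\<in>Poly_Mapping.keys hA. s \<noteq> ?u \<longrightarrow> grevlex_gt ?u s"
    using lead_mon_props[OF hA] by auto
  have ux: "gge ?u x" if "x \<in> Poly_Mapping.keys hA" for x
    using u that by (auto simp: gge_def)
  have keysi: "\<exists>x\<in>Poly_Mapping.keys hA. s = x + ?E i" if "s \<in> Poly_Mapping.keys (hA * Poly_Mapping.single (?E i) 1)" for s i
    using keys_mult_single[of hA "?E i" 1] that by blast
  show "gge v s" if s: "s \<in> Poly_Mapping.keys (hA * f)" for s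
  proof -
    obtain i where i: "i \<in> {1..m}" "s \<in> Poly_Mapping.keys (hA * Poly_Mapping.single (?E i) 1)"
      using s keys_sum[of "\<lambda>i. hA * Poly_Mapping.single (?E i) 1" "{1..m}"] unfolding prod by blast
    then obtain x where x: "x \<in> Poly_Mapping.keys hA" "s = x + ?E i" using keysi by blast
    show ?thesis unfolding v_def x(2) by (rule gge_add2[OF ux[OF x(1)] E_gge[OF i(1) N]])
  qed
  have zero: "Poly_Mapping.lookup (hA * Poly_Mapping.single (?E i) 1) v = 0" if i: "i \<in> {1..m} - {1}" for i
  proof (rule ccontr)
    assume "Poly_Mapping.lookup (hA * Poly_Mapping.single (?E i) 1) v \<noteq> 0"
    then have "v \<in> Poly_Mapping.keys (hA * Poly_Mapping.single (?E i) 1)" by (simp add: in_keys_iff)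
    then obtain x where x: "x \<in> Poly_Mapping.keys hA" "v = x + ?E i" using keysi by blast
    have i2: "i \<in> {2..m}" using i by auto
    have "grevlex_gt (?u + ?E 1) (x + ?E i)" by (rule gt_add2'[OF ux[OF x(1)] E_gt[OF i2 N]])
    then show False using x(2) gt_irrefl unfolding v_def by metis
  qed
  have "Poly_Mapping.lookup (hA * f) v = (\<Sum>i\<in>{1..m}. Poly_Mapping.lookup (hA * Poly_Mapping.single (?E i) 1) v)"
    unfolding prod by (simp add: lookup_sum)
  also have "\<dots> = Poly_Mapping.lookup (hA * Poly_Mapping.single (?E 1) 1) v
      + (\<Sum>i\<in>{1..m} - {1}. Poly_Mapping.lookup (hA * Poly_Mapping.single (?E i) 1) v)"
    using m by (subst sum.remove[of _ 1]) auto
  also have "(\<Sum>i\<in>{1..m} - {1}. Poly_Mapping.lookup (hA * Poly_Mapping.single (?E i) 1) v) = 0"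
    using zero by simp
  also have "Poly_Mapping.lookup (hA * Poly_Mapping.single (?E 1) 1) v = Poly_Mapping.lookup hA ?u"
    unfolding v_def by (simp add: lookup_mult_single)
  finally show "Poly_Mapping.lookup (hA * f) v = Poly_Mapping.lookup hA (lead_mon hA)" by simp
qed

lemma f_props:
  assumes N: "N \<ge> 1" and m: "m \<ge> 1"
  defines "f \<equiv> (\<Sum>i\<in>{1..m}. (Var i :: 'a::field mpoly) ^ N)"
  shows "f \<in> polyring m" "f \<noteq> 0" "lead_mon f = Poly_Mapping.single 1 N"
proof -
  let ?E = "\<lambda>i::nat. Poly_Mapping.single i N"
  have fe: "f = (\<Sum>i\<in>{1..m}. Poly_Mapping.single (?E i) (1::'a))" unfolding f_def f_expand ..
  have keys: "Poly_Mapping.keys f \<subseteq> ?E ` {1..m}"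
    unfolding fe using keys_sum[of "\<lambda>i. Poly_Mapping.single (?E i) (1::'a)" "{1..m}"] by auto
  show "f \<in> polyring m" unfolding fe
    by (rule ideal_sum[OF is_ideal_polyring]) (auto intro!: polyring_single single_pmons)
  have inj: "?E i = ?E 1 \<longleftrightarrow> i = 1" for i
  proof
    assume "?E i = ?E 1"
    then have "Poly_Mapping.lookup (?E i) i = Poly_Mapping.lookup (?E 1) i" by simp
    then show "i = 1" using N by (simp add: lookup_single when_def split: if_splits)
  qed simp
  have "Poly_Mapping.lookup f (?E 1) = (\<Sum>i\<in>{1..m}. if i = 1 then 1 else 0)"
    unfolding fe lookup_sum
  proof (rule sum.cong)
    fix i assume "i \<in> {1..m}"
    show "Poly_Mapping.lookup (Poly_Mapping.single (?E i) (1::'a)) (?E 1) = (if i = 1 then 1 else 0)"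
    proof (cases "i = 1")
      case False
      then have "?E i \<noteq> ?E 1" using inj by blast
      then show ?thesis using False by (simp add: lookup_single when_def)
    qed simp
  qed simp
  also have "\<dots> = (1::'a)" using m by simp
  finally have l1: "Poly_Mapping.lookup f (?E 1) = 1" .
  then have k1: "?E 1 \<in> Poly_Mapping.keys f" by (simp add: in_keys_iff)
  then show "f \<noteq> 0" by auto
  show "lead_mon f = ?E 1"
  proof (rule lead_mon_eq[OF k1], intro ballI impI)
    fix s assume s: "s \<in> Poly_Mapping.keys f" "s \<noteq> ?E 1"
    then obtain i where i: "i \<in> {1..m}" "s = ?E i" using keys by blast
    then have "i \<in> {2..m}" using s(2) by (cases "i = 1") auto
    then show "grevlex_gt (?E 1) s" using E_gt[OF _ N] i(2) by simp
  qed
qed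


theorem lemma5p1:
  fixes m N k p e q :: nat
  assumes "m \<ge> 2" and "N \<ge> 1" and "prime p" and "q = p ^ e"
  defines "Q \<equiv> ideal_pow m (gen_ideal m {(Var i :: 'a::field mpoly) ^ q | i. i \<in> {2..m}}) k"
  shows "init_ideal m (gen_ideal m ({\<Sum>i\<in>{1..m}. Var i ^ N} \<union> Q))
           = gen_ideal m ({Var 1 ^ N} \<union> Q)"
proof -
  have q0: "0 < q" using assms(3,4) by (simp add: prime_gt_0_nat)
  have m1: "m \<ge> 1" and N: "N \<ge> 1" using assms(1,2) by auto
  define M where "M = Mk m q k"
  have QM: "Q = MI m M" unfolding Q_def M_def by (rule Q_eq[OF q0])
  have Qi: "is_ideal m Q" unfolding QM M_def by (rule MI_ideal[OF Mk_upclosed])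
  have Qp: "Q \<subseteq> polyring m" using ideal_sub[OF Qi] by blast
  define f where "f = (\<Sum>i\<in>{1..m}. (Var i :: 'a mpoly) ^ N)"
  have fp: "f \<in> polyring m" and fnz: "f \<noteq> 0" and lf: "lead_mon f = Poly_Mapping.single 1 N"
    using f_props[OF N m1] unfolding f_def by auto
  have V1p: "(Var 1 :: 'a mpoly) ^ N \<in> polyring m"
    unfolding Var_pow monom_def by (rule polyring_single[OF single_pmons]) (use m1 in auto)
  define J where "J = gen_ideal m ({f} \<union> Q)"
  define R where "R = gen_ideal m ({(Var 1 :: 'a mpoly) ^ N} \<union> Q)"
  have Ji: "is_ideal m J" unfolding J_def by (rule gen_ideal_ideal) (use fp Qp in auto)
  have Ri: "is_ideal m R" unfolding R_def by (rule gen_ideal_ideal) (use V1p Qp in auto)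
  have QR: "Q \<subseteq> R" unfolding R_def using gen_ideal_sup by blast
  have V1R: "(Var 1 :: 'a mpoly) ^ N \<in> R" unfolding R_def using gen_ideal_sup by blast
  have QJ: "Q \<subseteq> J" unfolding J_def using gen_ideal_sup by blast
  have fJ: "f \<in> J" unfolding J_def using gen_ideal_sup by blast
  define PP where "PP = {h * f + r | h r. h \<in> polyring m \<and> r \<in> Q}"
  have PPi: "is_ideal m PP"
  proof (rule is_idealI)
    show "PP \<subseteq> polyring m" unfolding PP_def using fp Qp polyring_mult polyring_add by blast
    have e: "0 = 0 * f + 0" by simp
    have "(0::'a mpoly) \<in> Q" using Qi by (simp add: is_ideal_def)
    then show "0 \<in> PP" unfolding PP_def using polyring_0[of m] e by blast
  next
    fix a b :: "'a mpoly" assume "a \<in> PP" "b \<in> PP"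
    then obtain h1 r1 h2 r2 where h: "a = h1 * f + r1" "h1 \<in> polyring m" "r1 \<in> Q"
       "b = h2 * f + r2" "h2 \<in> polyring m" "r2 \<in> Q" unfolding PP_def by blast
    have "a + b = (h1 + h2) * f + (r1 + r2)" using h by (simp add: algebra_simps)
    moreover have "h1 + h2 \<in> polyring m" using h polyring_add by blast
    moreover have "r1 + r2 \<in> Q" using h Qi by (simp add: is_ideal_def)
    ultimately show "a + b \<in> PP" unfolding PP_def by blast
  next
    fix c a :: "'a mpoly" assume c: "c \<in> polyring m" and "a \<in> PP"
    then obtain h r where h: "a = h * f + r" "h \<in> polyring m" "r \<in> Q" unfolding PP_def by blast
    have "c * a = (c * h) * f + c * r" using h by (simp add: algebra_simps)
    moreover have "c * h \<in> polyring m" using h c polyring_mult by blast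
    moreover have "c * r \<in> Q" using h c Qi by (simp add: is_ideal_def)
    ultimately show "c * a \<in> PP" unfolding PP_def by blast
  qed
  have one_p: "(1 :: 'a mpoly) \<in> polyring m" by (simp add: polyring_iff pmons_0)
  have JPP: "J \<subseteq> PP" unfolding J_def
  proof (rule gen_ideal_least[OF PPi])
    have e: "f = 1 * f + 0" by simp
    have "(0::'a mpoly) \<in> Q" using Qi by (simp add: is_ideal_def)
    then have "f \<in> PP" unfolding PP_def using one_p e by blast
    moreover have "r \<in> PP" if "r \<in> Q" for r
    proof -
      have "r = 0 * f + r" by simp
      then show ?thesis unfolding PP_def using polyring_0 that by blast
    qed
    ultimately show "{f} \<union> Q \<subseteq> PP" by blast
  qed
  have Jp: "J \<subseteq> polyring m" using ideal_sub[OF Ji] by blast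
  have genp1: "monom (lead_mon g) \<in> polyring m" if g: "g \<in> J" "g \<noteq> 0" for g :: "'a mpoly"
  proof -
    have "lead_mon g \<in> Poly_Mapping.keys g" using lead_mon_props[OF g(2)] by blast
    moreover have "g \<in> polyring m" using g(1) Jp by blast
    ultimately have "lead_mon g \<in> pmons m" unfolding polyring_iff by blast
    then show ?thesis unfolding monom_def by (rule polyring_single)
  qed
  have genp: "{monom (lead_mon g) | g. g \<in> J \<and> g \<noteq> 0} \<subseteq> polyring m"
    using genp1 by blast
  let ?I = "init_ideal m J"
  have Ii: "is_ideal m ?I" unfolding init_ideal_def by (rule gen_ideal_ideal[OF genp])
  have inI: "monom (lead_mon g) \<in> ?I" if "g \<in> J" "g \<noteq> 0" for g
    unfolding init_ideal_def using that by (intro subsetD[OF gen_ideal_sup]) blast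
  have monom_lead: "lead_mon (monom t :: 'a mpoly) = t" for t
    by (rule lead_mon_eq) auto
  have sub1: "?I \<subseteq> R" unfolding init_ideal_def
  proof (rule gen_ideal_least[OF Ri], rule subsetI)
    fix x :: "'a mpoly" assume "x \<in> {monom (lead_mon g) | g. g \<in> J \<and> g \<noteq> 0}"
    then obtain g where g: "x = monom (lead_mon g)" "g \<in> J" "g \<noteq> 0" by blast
    obtain h r where hr: "g = h * f + r" "h \<in> polyring m" "r \<in> Q" using g(2) JPP unfolding PP_def by blast
    define hA where "hA = (\<Sum>t\<in>Poly_Mapping.keys h - M. Poly_Mapping.single t (Poly_Mapping.lookup h t))"
    define hB where "hB = (\<Sum>t\<in>Poly_Mapping.keys h \<inter> M. Poly_Mapping.single t (Poly_Mapping.lookup h t))"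
    have "h = (\<Sum>t\<in>(Poly_Mapping.keys h - M) \<union> (Poly_Mapping.keys h \<inter> M). Poly_Mapping.single t (Poly_Mapping.lookup h t))"
      by (subst poly_repr[of h]) (rule sum.cong, auto)
    also have "\<dots> = hA + hB" unfolding hA_def hB_def by (rule sum.union_disjoint) auto
    finally have hAB: "h = hA + hB" .
    have hkeys: "Poly_Mapping.keys h \<subseteq> pmons m" using hr(2) by (simp add: polyring_iff)
    have kA: "Poly_Mapping.keys hA \<subseteq> Poly_Mapping.keys h - M"
      unfolding hA_def using keys_sum[of "\<lambda>t. Poly_Mapping.single t (Poly_Mapping.lookup h t)" "Poly_Mapping.keys h - M"]
      by auto
    have hBQ: "hB \<in> Q" unfolding hB_def
    proof (rule ideal_sum[OF Qi])
      fix t assume t: "t \<in> Poly_Mapping.keys h \<inter> M"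
      then have "t \<in> pmons m" using hkeys by blast
      then show "Poly_Mapping.single t (Poly_Mapping.lookup h t) \<in> Q"
        unfolding QM MI_def using t by (auto intro: polyring_single)
    qed
    define r' where "r' = f * hB + r"
    have r'Q: "r' \<in> Q" unfolding r'_def using ideal_mult_closed[OF Qi fp hBQ] hr(3) Qi
      by (simp add: is_ideal_def)
    have r'M: "Poly_Mapping.keys r' \<subseteq> M" using r'Q unfolding QM MI_def by blast
    have geq: "g = hA * f + r'" unfolding r'_def hr(1) hAB by (simp add: algebra_simps)
    define w where "w = lead_mon g"
    have w: "w \<in> Poly_Mapping.keys g" "\<forall>s\<in>Poly_Mapping.keys g. s \<noteq> w \<longrightarrow> grevlex_gt w s"
      using lead_mon_props[OF g(3)] unfolding w_def by auto
    have "g \<in> polyring m" using g(2) Jp by blast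
    then have wp: "w \<in> pmons m" using w(1) unfolding polyring_iff by blast
    show "x \<in> R"
    proof (cases "w \<in> M")
      case True
      have "monom w \<in> Q" unfolding QM MI_def using True wp by (auto simp: monom_def intro: polyring_single)
      then show ?thesis using QR g(1) w_def by auto
    next
      case False
      have hA0: "hA \<noteq> 0"
      proof
        assume "hA = 0"
        then have "g = r'" using geq by simp
        then show False using w(1) r'M False by blast
      qed
      define u where "u = lead_mon hA"
      define v where "v = u + Poly_Mapping.single 1 N"
      have uk: "u \<in> Poly_Mapping.keys hA" using lead_mon_props[OF hA0] unfolding u_def by blast
      then have uM: "u \<notin> M" and up: "u \<in> pmons m" using kA hkeys by auto
      have vM: "v \<notin> M"
      proof
        assume "v \<in> M"
        then have "k \<le> (\<Sum>i\<in>{2..m}. Poly_Mapping.lookup v i div q)" unfolding M_def Mk_def by blast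
        also have "(\<Sum>i\<in>{2..m}. Poly_Mapping.lookup v i div q) = (\<Sum>i\<in>{2..m}. Poly_Mapping.lookup u i div q)"
          unfolding v_def by (rule sum.cong) (auto simp: lookup_add lookup_single when_def)
        finally show False using uM up unfolding M_def Mk_def by blast
      qed
      have KL1: "\<And>s. s \<in> Poly_Mapping.keys (hA * f) \<Longrightarrow> gge v s"
        and KL2: "Poly_Mapping.lookup (hA * f) v = Poly_Mapping.lookup hA u"
        using key_lemma[OF hA0 N m1] unfolding f_def[symmetric] u_def[symmetric] v_def[symmetric] by auto
      have "Poly_Mapping.lookup r' v = 0" using vM r'M by (auto simp: in_keys_iff)
      then have "Poly_Mapping.lookup g v = Poly_Mapping.lookup hA u"
        using KL2 geq by (simp add: lookup_add)
      then have vg: "v \<in> Poly_Mapping.keys g" using uk by (simp add: in_keys_iff)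
      have "Poly_Mapping.lookup r' w = 0" using False r'M by (auto simp: in_keys_iff)
      then have "Poly_Mapping.lookup (hA * f) w \<noteq> 0" using w(1) geq by (simp add: lookup_add in_keys_iff)
      then have "gge v w" using KL1 by (simp add: in_keys_iff)
      moreover have "v = w \<or> grevlex_gt w v" using vg w(2) by blast
      ultimately have wv: "w = v" using gt_asym unfolding gge_def by blast
      have "monom w = monom u * (Var 1 :: 'a mpoly) ^ N"
        unfolding wv v_def by (simp add: Var_pow monom_def mult_single)
      moreover have "monom u \<in> polyring m" unfolding monom_def using up by (rule polyring_single)
      ultimately have "monom w \<in> R" using ideal_mult_closed[OF Ri _ V1R] by simp
      then show ?thesis using g(1) w_def by simp
    qed
  qed
  have sub2: "R \<subseteq> ?I" unfolding R_def
  proof (rule gen_ideal_least[OF Ii])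
    have "(Var 1 :: 'a mpoly) ^ N = monom (lead_mon f)" by (simp add: lf Var_pow)
    then have "(Var 1 :: 'a mpoly) ^ N \<in> ?I" using inI[OF fJ fnz] by simp
    moreover have "Q \<subseteq> ?I"
    proof
      fix r :: "'a mpoly" assume r: "r \<in> Q"
      show "r \<in> ?I"
      proof (rule ideal_from_monoms[OF Ii])
        show "r \<in> polyring m" using r Qp by blast
        fix t assume t: "t \<in> Poly_Mapping.keys r"
        have rr: "r \<in> polyring m" "Poly_Mapping.keys r \<subseteq> M" using r unfolding QM MI_def by auto
        have tM: "t \<in> M" using rr(2) t by blast
        have tp: "t \<in> pmons m" using rr(1) t unfolding polyring_iff by blast
        have "monom t \<in> Q" unfolding QM MI_def using tM tp by (auto simp: monom_def intro: polyring_single)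
        then have mJ: "monom t \<in> J" using QJ by blast
        have mnz: "(monom t :: 'a mpoly) \<noteq> 0"
        proof
          assume "(monom t :: 'a mpoly) = 0"
          then have "Poly_Mapping.keys (monom t :: 'a mpoly) = {}" by simp
          then show False by simp
        qed
        have "monom (lead_mon (monom t :: 'a mpoly)) \<in> ?I" by (rule inI[OF mJ mnz])
        then show "monom t \<in> ?I" by (simp add: monom_lead)
      qed
    qed
    ultimately show "{(Var 1 :: 'a mpoly) ^ N} \<union> Q \<subseteq> ?I" by blast
  qed
  show ?thesis using sub1 sub2 unfolding J_def R_def f_def by blast
qed

end
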